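(* Let $L=\{x: Ax\le b\}$ be a full-dimensional rational polytope in $\mathbb{R}^m$, $m\ge2$, where $A$ is an integral matrix with rows $a_1,\dots,a_n$ and $b$ is an integral vector. Suppose $a_1x\le b_1$ defines a facet of $L$ and its affine hull $\{x: a_1x=b_1\}$ contains no integer point. Let $\tilde A$ be $A$ with row $a_1$ removed and $\tilde b$ be $b$ with its first component removed. Then there exists a rational inequality $a'x\le b'$ such that $\tilde L:=\{x:\tilde Ax\le\tilde b,\ a'x\le b'\}$ contains the same integer points as $L$, $L\subseteq\tilde L$, and the hyperplane $\{x: a'x=b'\}$ contains integer points. *)

theory Defs
  imports "HOL-Analysis.Analysis"
begin

definition int_point :: "real^'m \<Rightarrow> bool" where
  "int_point x \<longleftrightarrow> (\<forall>j. x $ j \<in> \<int>)"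

definition rat_vec :: "real^'m \<Rightarrow> bool" where
  "rat_vec x \<longleftrightarrow> (\<forall>j. x $ j \<in> \<rat>)"

end

theory Submission
  imports Defs
begin

lemma int_inner: assumes "int_point u" "int_point v" shows "u \<bullet> v \<in> \<int>"
  using assms unfolding int_point_def inner_vec_def
  by (intro Ints_sum) (auto simp: Ints_mult)

theorem lemma7:
  fixes a :: "nat \<Rightarrow> real^'m" and b :: "nat \<Rightarrow> real" and n :: nat
    and L :: "(real^'m) set"
  assumes m2: "CARD('m) \<ge> 2"
    and n1: "n \<ge> 1"
    and A_int: "\<forall>i<n. int_point (a i)"
    and b_int: "\<forall>i<n. b i \<in> \<int>"
    and L_def: "L = {x. \<forall>i<n. a i \<bullet> x \<le> b i}"
    and bounded: "bounded L"
    and full: "aff_dim L = int CARD('m)"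
    and facet: "(L \<inter> {x. a 0 \<bullet> x = b 0}) facet_of L"
    and no_int: "\<not> (\<exists>z. int_point z \<and> a 0 \<bullet> z = b 0)"
  shows "\<exists>a' b'. rat_vec a' \<and> b' \<in> \<rat> \<and> a' \<noteq> 0 \<and>
           (let Lt = {x. (\<forall>i\<in>{1..<n}. a i \<bullet> x \<le> b i) \<and> a' \<bullet> x \<le> b'}
            in {z \<in> Lt. int_point z} = {z \<in> L. int_point z} \<and> L \<subseteq> Lt \<and>
               (\<exists>z. int_point z \<and> a' \<bullet> z = b'))"
proof -
  define F where "F = L \<inter> {x. a 0 \<bullet> x = b 0}"
  have Fne: "F \<noteq> {}" and FL: "F \<noteq> L" using facet unfolding F_def facet_of_def by auto
  obtain x1 where x1: "x1 \<in> L" "a 0 \<bullet> x1 = b 0" using Fne unfolding F_def by auto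
  obtain y0 where y0L: "y0 \<in> L" and y0F: "y0 \<notin> F" using FL unfolding F_def by auto
  have "a 0 \<bullet> y0 \<le> b 0" using y0L n1 unfolding L_def by auto
  with y0F y0L have y0lt: "a 0 \<bullet> y0 < b 0" unfolding F_def by auto
  define s where "s = b 0 - a 0 \<bullet> y0"
  have s0: "s > 0" using y0lt s_def by auto
  have a0nz: "a 0 \<noteq> 0" using x1 y0lt by auto
  then obtain i where ai0: "a 0 $ i \<noteq> 0" by (metis vec_eq_iff zero_index)
  obtain j where ji: "j \<noteq> i"
  proof -
    have "\<exists>j::'m. j \<noteq> i"
    proof (rule ccontr)
      assume "\<not> ?thesis"
      then have "(UNIV::'m set) = {i}" by auto
      then have "CARD('m) = card {i}" by (simp only:)
      then have "CARD('m) = 1" by simp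
      then show False using m2 by simp
    qed
    then show ?thesis using that by blast
  qed
  have a0int: "int_point (a 0)" using A_int n1 by auto
  obtain ai where ai: "a 0 $ i = of_int ai" using a0int unfolding int_point_def by (meson Ints_cases)
  obtain aj where aj: "a 0 $ j = of_int aj" using a0int unfolding int_point_def by (meson Ints_cases)
  obtain bb where bb: "b 0 = of_int bb" using b_int n1 by (meson Ints_cases less_le_trans zero_less_one)
  have ai0': "ai \<noteq> 0" using ai ai0 by auto
  obtain B where B: "\<forall>x\<in>L. norm x \<le> B" using bounded bounded_iff by blast
  have B0: "B \<ge> 0" using B y0L norm_ge_zero order_trans by blast
  have Bj: "\<bar>x $ j\<bar> \<le> B" if "x \<in> L" for x
    using B that component_le_norm_cart order_trans by blast
  define R where "R = ceiling B"
  have RB: "B \<le> of_int R" unfolding R_def by simp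
  define Mi where "Mi = max 1 (ceiling (2*B/s + 3*B + of_int R + 2))"
  define K where "K = ai * ai * Mi"
  define M where "M = ai * Mi"
  have KM: "K = ai * M" unfolding K_def M_def by simp
  have Mi1: "Mi \<ge> 1" unfolding Mi_def by simp
  have "ai * ai > 0" using ai0' by (auto simp add: zero_less_mult_iff linorder_neq_iff)
  then have "ai * ai \<ge> 1" by simp
  then have KMi: "K \<ge> Mi" unfolding K_def using mult_right_mono[OF \<open>ai * ai \<ge> 1\<close>, of Mi] Mi1 by simp
  have Kbig: "real_of_int K \<ge> 2*B/s + 3*B + of_int R + 2"
  proof -
    have "2*B/s + 3*B + of_int R + 2 \<le> of_int Mi" unfolding Mi_def
      by (metis le_of_int_ceiling max.cobounded2 of_int_le_iff order_trans)
    also have "\<dots> \<le> of_int K" using KMi by simp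
    finally show ?thesis .
  qed
  have "2*B/s \<ge> 0" using B0 s0 by simp
  then have K0: "real_of_int K \<ge> 0" using Kbig B0 RB by linarith
  define a' where "a' = of_int K *\<^sub>R a 0 + axis j 1"
  define b' :: real where "b' = of_int (K * bb + R)"
  have a'k: "a' $ k = of_int K * a 0 $ k + (if k = j then 1 else 0)" for k
    unfolding a'_def by (simp add: axis_def)
  have a'x: "a' \<bullet> x = of_int K * (a 0 \<bullet> x) + x $ j" for x
    unfolding a'_def by (simp add: inner_add_left inner_axis')
  show ?thesis
  proof (intro exI conjI)
    show "rat_vec a'" unfolding rat_vec_def a'k
      using a0int unfolding int_point_def by (auto intro!: Ints_subset_Rats[THEN subsetD])
    show "b' \<in> \<rat>" unfolding b'_def by simp
    show "a' \<noteq> 0"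
    proof
      assume "a' = 0"
      then have "a' $ i = 0" by simp
      then have "of_int K * a 0 $ i = 0" using a'k[of i] ji by simp
      then show False using ai0 KMi Mi1 by simp
    qed
    let ?Lt = "{x. (\<forall>i\<in>{1..<n}. a i \<bullet> x \<le> b i) \<and> a' \<bullet> x \<le> b'}"
    have sub: "L \<subseteq> ?Lt"
    proof
      fix x assume xL: "x \<in> L"
      have c: "\<forall>i<n. a i \<bullet> x \<le> b i" using xL L_def by auto
      have "a 0 \<bullet> x \<le> b 0" using c n1 by auto
      then have "of_int K * (a 0 \<bullet> x) \<le> of_int K * b 0" using K0 by (simp add: mult_left_mono)
      moreover have "x $ j \<le> of_int R" using Bj[OF xL] RB by auto
      ultimately have "a' \<bullet> x \<le> b'" unfolding a'x b'_def bb by simp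
      then show "x \<in> ?Lt" using c by auto
    qed
    have bk: "z \<in> L" if zLt: "z \<in> ?Lt" and zi: "int_point z" for z
    proof (rule ccontr)
      assume zn: "z \<notin> L"
      have c: "\<forall>i\<in>{1..<n}. a i \<bullet> z \<le> b i" and za: "a' \<bullet> z \<le> b'" using zLt by auto
      have "\<not> a 0 \<bullet> z \<le> b 0"
      proof
        assume "a 0 \<bullet> z \<le> b 0"
        then have "\<forall>i<n. a i \<bullet> z \<le> b i"
        proof (intro allI impI)
          fix k assume "a 0 \<bullet> z \<le> b 0" "k < n"
          then show "a k \<bullet> z \<le> b k" using c by (cases "k = 0") auto
        qed
        then show False using zn L_def by auto
      qed
      then have gt: "a 0 \<bullet> z > b 0" by simp
      have "a 0 \<bullet> z \<in> \<int>" using int_inner[OF a0int zi] .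
      then obtain u where u: "a 0 \<bullet> z = of_int u" by (meson Ints_cases)
      define t where "t = a 0 \<bullet> z - b 0"
      have t1: "t \<ge> 1" using gt u bb unfolding t_def by simp
      define l where "l = s / (s + t)"
      have l0: "l > 0" "l \<le> 1" using s0 t1 unfolding l_def by auto
      define w where "w = y0 + l *\<^sub>R (z - y0)"
      have wL: "w \<in> L"
      proof -
        have yc: "\<forall>i<n. a i \<bullet> y0 \<le> b i" using y0L L_def by auto
        have "a k \<bullet> w \<le> b k" if k: "k < n" for k
        proof (cases "k = 0")
          case True
          have "a 0 \<bullet> w = a 0 \<bullet> y0 + l * (t + s)"
            unfolding w_def t_def s_def by (simp add: inner_add_right inner_diff_right)
          also have "\<dots> = b 0" using s0 t1 unfolding l_def s_def by (simp add: field_simps)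
          finally show ?thesis using True by simp
        next
          case False
          then have "k \<in> {1..<n}" using k by auto
          then have hz: "a k \<bullet> z \<le> b k" using c by auto
          have hy: "a k \<bullet> y0 \<le> b k" using yc k by auto
          have "a k \<bullet> w = (1 - l) * (a k \<bullet> y0) + l * (a k \<bullet> z)"
            unfolding w_def by (simp add: inner_add_right inner_diff_right algebra_simps)
          also have "\<dots> \<le> (1 - l) * b k + l * b k"
            using hz hy l0 by (intro add_mono mult_left_mono) auto
          finally show ?thesis by (simp add: algebra_simps)
        qed
        then show ?thesis unfolding L_def by auto
      qed
      have wj: "w $ j - y0 $ j = l * (z $ j - y0 $ j)" unfolding w_def by simp
      have "w $ j - y0 $ j \<ge> -2*B" using Bj[OF wL] Bj[OF y0L] by auto
      then have "l * (z $ j - y0 $ j) \<ge> -2*B" using wj by simp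
      then have "s * (z $ j - y0 $ j) \<ge> -2*B*(s+t)"
        using s0 t1 unfolding l_def by (simp add: field_simps)
      moreover have "s * y0 $ j \<ge> s * (-B)" using Bj[OF y0L] s0 by (intro mult_left_mono) auto
      ultimately have zj: "s * z $ j \<ge> - s * B - 2 * B * s - 2 * B * t"
        by (simp add: algebra_simps)
      have eq: "s * (a' \<bullet> z) = s * of_int K * b 0 + s * of_int K * t + s * z $ j"
        unfolding a'x t_def by (simp add: algebra_simps)
      have "s * (2*B/s + 3*B + of_int R + 2) \<le> s * of_int K"
        using Kbig s0 by (intro mult_left_mono) auto
      then have kk: "s * of_int K - 2*B \<ge> s * (3*B + of_int R + 2)"
        using s0 by (simp add: algebra_simps)
      have kk0: "s * (3*B + of_int R + 2) > 0" using s0 B0 RB by simp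
      have tt: "(s * of_int K - 2*B) * t \<ge> (s * of_int K - 2*B) * 1"
        using t1 kk kk0 by (intro mult_left_mono) auto
      have "s * b' = s * of_int K * b 0 + s * of_int R" unfolding b'_def bb by (simp add: algebra_simps)
      then have "s * (a' \<bullet> z) > s * b'" using eq zj kk tt s0
        by (simp add: algebra_simps)
      then have "a' \<bullet> z > b'" using s0 by simp
      then show False using za by simp
    qed
    have fin: "{z \<in> ?Lt. int_point z} = {z \<in> L. int_point z} \<and> L \<subseteq> ?Lt \<and>
               (\<exists>z. int_point z \<and> a' \<bullet> z = b')"
    proof (intro conjI)
      show "{z \<in> ?Lt. int_point z} = {z \<in> L. int_point z}" using bk sub by blast
      show "L \<subseteq> ?Lt" using sub .
      define T where "T = K * bb + R"
      define p where "p = M * aj * aj"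
      define q where "q = 1 - K * aj"
      define z where "z = of_int (T*p) *\<^sub>R axis i (1::real) + of_int (T*q) *\<^sub>R axis j 1"
      have zi: "int_point z" unfolding int_point_def z_def by (auto simp: axis_def)
      have "a' \<bullet> z = of_int (T*p) * a' $ i + of_int (T*q) * a' $ j"
        unfolding z_def by (simp add: inner_add_right inner_axis)
      also have "\<dots> = of_int (T*p*(K*ai) + T*q*(K*aj+1))" using a'k[of i] a'k[of j] ji ai aj by simp
      also have "T*p*(K*ai) + T*q*(K*aj+1) = T"
        unfolding p_def q_def KM by (simp add: algebra_simps)
      finally have "a' \<bullet> z = b'" unfolding T_def b'_def .
      then show "\<exists>z. int_point z \<and> a' \<bullet> z = b'" using zi by blast
    qed
    then show "let Lt = {x. (\<forall>i\<in>{1..<n}. a i \<bullet> x \<le> b i) \<and> a' \<bullet> x \<le> b'}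
            in {z \<in> Lt. int_point z} = {z \<in> L. int_point z} \<and> L \<subseteq> Lt \<and>
               (\<exists>z. int_point z \<and> a' \<bullet> z = b')" unfolding Let_def .
  qed
qed

end
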